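(* Let $U,V\in\mathbb{R}^{3\times3}$ be symmetric positive-definite matrices with $U\neq V$ and $UV=VU$, and suppose the eigenvalues $\lambda_1,\lambda_2,\lambda_3$ of $U$ are pairwise distinct. Suppose there is a unit vector $\hat e\in\mathbb{R}^3$ such that $V=(-I+2\,\hat e\otimes\hat e)\,U\,(-I+2\,\hat e\otimes\hat e)$. Then $\hat e$ is perpendicular to an eigenvector of $U$. Consequently $U$ and $V$ form compound domains: there is a unit vector $\hat e'$ with $\hat e'\perp\hat e$ such that $V=(-I+2\,\hat e'\otimes\hat e')\,U\,(-I+2\,\hat e'\otimes\hat e')$ as well.
   Context: $-I+2\hat e\otimes\hat e$ is the rotation by $180^\circ$ about the unit vector $\hat e$. Two distinct symmetric positive-definite matrices $U,V$ are said to form compound domains if there exist two non-parallel unit vectors $\hat e_1,\hat e_2$ with $V=(-I+2\hat e_i\otimes\hat e_i)U(-I+2\hat e_i\otimes\hat e_i)$ for $i=1,2$. A known result used in this setting: if $V=(-I+2\hat e_1\otimes\hat e_1)U(-I+2\hat e_1\otimes\hat e_1)\neq U$, then a second such axis $\hat e_2\nparallel\hat e_1$ exists if and only if $\hat e_1$ is perpendicular to an eigenvector of $U$, in which case $\hat e_1,\hat e_2$ and that eigenvector form an orthonormal basis. *)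

theory Defs
  imports "HOL-Analysis.Analysis"
begin

definition outer :: "real^'n \<Rightarrow> real^'n \<Rightarrow> real^'n^'n" where
  "outer a b = (\<chi> i j. a $ i * b $ j)"

definition rot180 :: "real^'n \<Rightarrow> real^'n^'n" where
  "rot180 e = - mat 1 + 2 *\<^sub>R outer e e"

definition sym_mat :: "real^'n^'n \<Rightarrow> bool" where
  "sym_mat A \<longleftrightarrow> transpose A = A"

definition pos_def_mat :: "real^'n^'n \<Rightarrow> bool" where
  "pos_def_mat A \<longleftrightarrow> sym_mat A \<and> (\<forall>x. x \<noteq> 0 \<longrightarrow> x \<bullet> (A *v x) > 0)"

definition is_eigenvector :: "real^'n^'n \<Rightarrow> real^'n \<Rightarrow> bool" where
  "is_eigenvector A v \<longleftrightarrow> v \<noteq> 0 \<and> (\<exists>c. A *v v = c *\<^sub>R v)"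

definition real_eigenvalues :: "real^'n^'n \<Rightarrow> real set" where
  "real_eigenvalues A = {c. \<exists>v. v \<noteq> 0 \<and> A *v v = c *\<^sub>R v}"

end

theory Submission imports Defs begin

lemma outer_apply: "outer e e *v x = (e \<bullet> x) *\<^sub>R e"
  by (simp add: outer_def vec_eq_iff matrix_vector_mult_def inner_vec_def sum_distrib_left
      sum_distrib_right algebra_simps)

lemma rot_apply: "rot180 e *v x = (e \<bullet> x) *\<^sub>R e + (e \<bullet> x) *\<^sub>R e - x"
proof -
  have "rot180 e = 2 *\<^sub>R outer e e - mat 1" unfolding rot180_def by simp
  hence h: "rot180 e *v x = 2 *\<^sub>R (outer e e *v x) - x"
    by (simp add: matrix_vector_mult_diff_rdistrib scaleR_matrix_vector_assoc)
  show ?thesis by (simp only: h outer_apply scaleR_2)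
qed

lemma sym_inner: assumes "sym_mat U" shows "(U *v x) \<bullet> y = x \<bullet> (U *v y)"
proof -
  have "U *v x = x v* U" using assms unfolding sym_mat_def
    by (metis vector_transpose_matrix)
  then show ?thesis by (simp add: dot_lmul_matrix)
qed

lemma expand3:
  fixes e f w x :: "real^3"
  assumes "e \<bullet> e = 1" "f \<bullet> f = 1" "w \<bullet> w = 1" "e \<bullet> f = 0" "e \<bullet> w = 0" "f \<bullet> w = 0"
  shows "x = (e \<bullet> x) *\<^sub>R e + (f \<bullet> x) *\<^sub>R f + (w \<bullet> x) *\<^sub>R w"
proof -
  define Q :: "real^3^3" where "Q = vector [e, f, w]"
  have "Q ** transpose Q = mat 1"
    using assms
    by (simp add: Q_def vec_eq_iff forall_3 vector_3 matrix_matrix_mult_def transpose_def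
        mat_def inner_vec_def sum_3 inner_commute mult.commute)
  hence "transpose Q ** Q = mat 1" by (simp add: matrix_left_right_inverse)
  hence "x = (transpose Q ** Q) *v x" by simp
  also have "\<dots> = transpose Q *v (Q *v x)" by (simp add: matrix_vector_mul_assoc)
  also have "\<dots> = (e \<bullet> x) *\<^sub>R e + (f \<bullet> x) *\<^sub>R f + (w \<bullet> x) *\<^sub>R w"
    by (simp add: Q_def vec_eq_iff forall_3 vector_3 matrix_vector_mult_def transpose_def
        inner_vec_def sum_3 algebra_simps)
  finally show ?thesis .
qed


lemma rot_inner: "v \<bullet> (rot180 e *v y) = (rot180 e *v v) \<bullet> y"
  by (simp only: rot_apply inner_diff_right inner_diff_left inner_add_left inner_add_right inner_scaleR_left inner_scaleR_right inner_commute) (simp add: inner_commute)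

lemma offdiag:
  fixes U V :: "real^'n^'n"
  assumes sU: "sym_mat U" and ui: "U *v vi = ai *\<^sub>R vi" and uj: "U *v vj = aj *\<^sub>R vj"
    and ort: "vi \<bullet> vj = 0" and ne: "ai \<noteq> aj" and comm: "U ** V = V ** U"
    and Vd: "V = rot180 e ** U ** rot180 e"
  shows "(e \<bullet> vi) * (e \<bullet> vj) * (2 * (e \<bullet> (U *v e)) - ai - aj) = 0"
proof -
  have a: "vi \<bullet> ((U ** V) *v vj) = ai * (vi \<bullet> (V *v vj))"
    by (metis matrix_vector_mul_assoc sym_inner[OF sU] ui inner_scaleR_left)
  have b: "vi \<bullet> ((V ** U) *v vj) = aj * (vi \<bullet> (V *v vj))"
    by (metis matrix_vector_mul_assoc uj matrix_vector_mult_scaleR inner_scaleR_right)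
  from a b comm ne have z: "vi \<bullet> (V *v vj) = 0" by auto
  define ci where "ci = e \<bullet> vi"
  define cj where "cj = e \<bullet> vj"
  define s where "s = e \<bullet> (U *v e)"
  have Ri: "rot180 e *v vi = ci *\<^sub>R e + ci *\<^sub>R e - vi" by (simp only: rot_apply ci_def)
  have Rj: "U *v (rot180 e *v vj) = cj *\<^sub>R (U *v e) + cj *\<^sub>R (U *v e) - aj *\<^sub>R vj"
    by (simp only: rot_apply cj_def matrix_vector_right_distrib matrix_vector_mult_diff_distrib
        matrix_vector_mult_scaleR uj)
  have vUe: "vi \<bullet> (U *v e) = ai * ci"
    by (metis sym_inner[OF sU] ui inner_scaleR_left inner_commute ci_def)
  have eUe: "e \<bullet> (U *v e) = s" by (simp add: s_def)
  have "vi \<bullet> (V *v vj) = (rot180 e *v vi) \<bullet> (U *v (rot180 e *v vj))"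
    by (simp add: Vd matrix_vector_mul_assoc[symmetric] rot_inner)
  also have "\<dots> = (ci *\<^sub>R e + ci *\<^sub>R e - vi) \<bullet> (cj *\<^sub>R (U *v e) + cj *\<^sub>R (U *v e) - aj *\<^sub>R vj)"
    by (simp only: Ri Rj)
  also have "\<dots> = 4 * ci * cj * s - 2 * ci * aj * cj - 2 * cj * (ai * ci) + aj * (vi \<bullet> vj)"
    by (simp only: inner_diff_left inner_diff_right inner_add_left inner_add_right inner_scaleR_left
        inner_scaleR_right eUe vUe) (simp add: ci_def cj_def inner_commute algebra_simps)
  finally show ?thesis using z ort by (simp add: algebra_simps ci_def cj_def s_def)
qed

lemma aux3: fixes z A B C :: "'a::ab_group_add" shows "z = A + B + C \<Longrightarrow> B = z - A - C"
  by (simp add: algebra_simps)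

lemma aux4: fixes z A B C :: "'a::ab_group_add" assumes h: "B = z - A - C" shows "B + B - z = - (A + A - z) - C - C"
  unfolding h by (simp add: algebra_simps)

lemma aux5: fixes A B :: "'a::ab_group_add" shows "- (- A - B - B) = A + B + B"
  by (simp add: algebra_simps)

lemma mv_neg: "(A::real^'n^'m) *v (- x) = - (A *v x)"
  by (metis matrix_vector_mult_scaleR scaleR_minus1_left)

lemma part2:
  fixes U :: "real^3^3" and e w :: "real^3"
  assumes sU: "sym_mat U" and uw: "U *v w = a *\<^sub>R w" and ww: "w \<bullet> w = 1" and ee: "e \<bullet> e = 1"
    and ew: "e \<bullet> w = 0"
  shows "\<exists>f. norm f = 1 \<and> f \<bullet> e = 0 \<and>
      rot180 e ** U ** rot180 e = rot180 f ** U ** rot180 f"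
proof -
  define f where "f = cross3 e w"
  have fe: "f \<bullet> e = 0" "e \<bullet> f = 0" unfolding f_def using dot_cross_self by (auto simp: inner_commute)
  have fw: "f \<bullet> w = 0" "w \<bullet> f = 0" unfolding f_def using dot_cross_self by (auto simp: inner_commute)
  have nf: "norm f = 1"
  proof -
    have "(norm f)^2 = 1" using norm_cross_dot[of e w] ew ee ww
      by (simp add: f_def norm_eq_sqrt_inner)
    thus ?thesis using norm_ge_zero[of f] by (simp add: power2_eq_1_iff)
  qed
  hence ff: "f \<bullet> f = 1" by (simp add: dot_square_norm)
  have Rf: "rot180 f *v z = - (rot180 e *v z) - (w \<bullet> z) *\<^sub>R w - (w \<bullet> z) *\<^sub>R w" for z
  proof -
    have ex: "z = (e \<bullet> z) *\<^sub>R e + (f \<bullet> z) *\<^sub>R f + (w \<bullet> z) *\<^sub>R w"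
      using expand3[OF ee ff ww fe(2) ew fw(1)] .
    have "(f \<bullet> z) *\<^sub>R f = z - (e \<bullet> z) *\<^sub>R e - (w \<bullet> z) *\<^sub>R w"
      using aux3[OF ex] .
    then show ?thesis unfolding rot_apply by (rule aux4)
  qed
  have Rw: "rot180 e *v w = - w" by (simp add: rot_apply ew)
  have "(rot180 e ** U ** rot180 e) *v x = (rot180 f ** U ** rot180 f) *v x" for x
  proof -
    define t where "t = w \<bullet> x"
    define y where "y = rot180 e *v x + t *\<^sub>R w + t *\<^sub>R w"
    have wRx: "w \<bullet> (rot180 e *v x) = - t"
      by (simp only: rot_inner Rw t_def inner_minus_left)
    have wy: "w \<bullet> y = t"
      by (simp only: y_def inner_add_right wRx inner_scaleR_right ww) simp?
    have wUy: "w \<bullet> (U *v y) = a * t"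
      by (metis sym_inner[OF sU] uw inner_scaleR_left wy)
    have Rfx: "rot180 f *v x = - y"
      by (simp add: Rf y_def t_def)
    have "(rot180 f ** U ** rot180 f) *v x = rot180 f *v (U *v (rot180 f *v x))"
      by (simp add: matrix_vector_mul_assoc matrix_mul_assoc)
    also have "\<dots> = - (rot180 f *v (U *v y))"
      by (simp only: Rfx mv_neg)
    also have "\<dots> = - (- (rot180 e *v (U *v y)) - (a * t) *\<^sub>R w - (a * t) *\<^sub>R w)"
      by (simp only: Rf wUy)
    also have "\<dots> = rot180 e *v (U *v y) + (a * t) *\<^sub>R w + (a * t) *\<^sub>R w"
      by (rule aux5)
    also have "rot180 e *v (U *v y) = rot180 e *v (U *v (rot180 e *v x)) - (t * a) *\<^sub>R w - (t * a) *\<^sub>R w"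
      by (simp only: y_def matrix_vector_right_distrib matrix_vector_mult_scaleR uw Rw scaleR_scaleR)
         (simp add: algebra_simps)
    finally show ?thesis by (simp add: matrix_vector_mul_assoc matrix_mul_assoc algebra_simps)
  qed
  hence "rot180 e ** U ** rot180 e = rot180 f ** U ** rot180 f" by (simp add: matrix_eq)
  with nf fe show ?thesis by blast
qed

lemma finish:
  fixes U V :: "real^3^3" and e v :: "real^3"
  assumes sU: "sym_mat U" and uv: "U *v v = a *\<^sub>R v" and v0: "v \<noteq> 0" and ev: "e \<bullet> v = 0"
    and ne: "norm e = 1" and Vd: "V = rot180 e ** U ** rot180 e"
  shows "(\<exists>v. is_eigenvector U v \<and> v \<bullet> e = 0) \<and>
         (\<exists>e'. norm e' = 1 \<and> e' \<bullet> e = 0 \<and> V = rot180 e' ** U ** rot180 e')"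
proof
  show "\<exists>v. is_eigenvector U v \<and> v \<bullet> e = 0"
    using uv v0 ev by (auto simp: is_eigenvector_def inner_commute)
  define w where "w = (1 / norm v) *\<^sub>R v"
  have nv: "norm v \<noteq> 0" using v0 by simp
  have uw: "U *v w = a *\<^sub>R w" by (simp add: w_def matrix_vector_mult_scaleR uv)
  have ww: "w \<bullet> w = 1" using nv by (simp add: w_def dot_square_norm power2_eq_square)
  have ee: "e \<bullet> e = 1" using ne by (simp add: dot_square_norm)
  have ew: "e \<bullet> w = 0" by (simp add: w_def ev)
  from part2[OF sU uw ww ee ew] Vd
  show "\<exists>e'. norm e' = 1 \<and> e' \<bullet> e = 0 \<and> V = rot180 e' ** U ** rot180 e'" by metis
qed

theorem mainTheorem1:
  fixes U V :: "real^3^3" and e :: "real^3"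
  assumes "pos_def_mat U" and "pos_def_mat V"
    and "U \<noteq> V" and "U ** V = V ** U"
    and "card (real_eigenvalues U) = 3"
    and "norm e = 1"
    and "V = rot180 e ** U ** rot180 e"
  shows "(\<exists>v. is_eigenvector U v \<and> v \<bullet> e = 0) \<and>
         (\<exists>e'. norm e' = 1 \<and> e' \<bullet> e = 0 \<and> V = rot180 e' ** U ** rot180 e')"
proof -
  have sU: "sym_mat U" using assms(1) by (simp add: pos_def_mat_def)
  obtain a1 a2 a3 where A: "real_eigenvalues U = {a1, a2, a3}" and d: "a1 \<noteq> a2" "a2 \<noteq> a3" "a1 \<noteq> a3"
    using assms(5) card_3_iff by metis
  obtain v1 where v1: "v1 \<noteq> 0" "U *v v1 = a1 *\<^sub>R v1" using A unfolding real_eigenvalues_def by blast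
  obtain v2 where v2: "v2 \<noteq> 0" "U *v v2 = a2 *\<^sub>R v2" using A unfolding real_eigenvalues_def by blast
  obtain v3 where v3: "v3 \<noteq> 0" "U *v v3 = a3 *\<^sub>R v3" using A unfolding real_eigenvalues_def by blast
  have orth: "x \<bullet> y = 0" if "U *v x = a *\<^sub>R x" "U *v y = b *\<^sub>R y" "a \<noteq> b" for x y a b
  proof -
    have "a * (x \<bullet> y) = b * (x \<bullet> y)"
      using sym_inner[OF sU, of x y] that by simp
    thus ?thesis using that(3) by simp
  qed
  have o12: "v1 \<bullet> v2 = 0" using orth v1 v2 d by blast
  have o13: "v1 \<bullet> v3 = 0" using orth v1 v3 d by blast
  have o23: "v2 \<bullet> v3 = 0" using orth v2 v3 d by blast
  note h12 = offdiag[OF sU v1(2) v2(2) o12 d(1) assms(4) assms(7)]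
  note h13 = offdiag[OF sU v1(2) v3(2) o13 d(3) assms(4) assms(7)]
  note h23 = offdiag[OF sU v2(2) v3(2) o23 d(2) assms(4) assms(7)]
  have "e \<bullet> v1 = 0 \<or> e \<bullet> v2 = 0 \<or> e \<bullet> v3 = 0"
  proof (rule ccontr)
    assume "\<not> ?thesis"
    hence "2 * (e \<bullet> (U *v e)) - a1 - a2 = 0" "2 * (e \<bullet> (U *v e)) - a1 - a3 = 0"
      using h12 h13 by auto
    thus False using d by simp
  qed
  thus ?thesis
    using finish[OF sU v1(2) v1(1) _ assms(6) assms(7)]
      finish[OF sU v2(2) v2(1) _ assms(6) assms(7)]
      finish[OF sU v3(2) v3(1) _ assms(6) assms(7)] by blast
qed

end
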